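(* Let $d\ge1$, $r\in\mathbb N$ with $r\ge1$, $\alpha>0$, and let $\Phi\in\mathrm{CP}_r(\mathbb R^d)$ be real-valued with $|\Phi(x)|\le C(1+\|x\|^\alpha)$ for all $x$. Let $\Xi=\{\xi_1,\dots,\xi_N\}\subset\mathbb R^d$, $N=\binom{d+r-1}{r-1}$, be unisolvent for $\Pi_{r-1}(\mathbb R^d)$ with Lagrange basis $p_1,\dots,p_N$ ($p_j(\xi_k)=\delta_{jk}$), let $\tilde K(x,y):=\Phi(x-y)$ and $$K(x,y):=\Phi(x-y)-\sum_{j=1}^Np_j(x)\Phi(\xi_j-y)-\sum_{k=1}^Np_k(y)\Phi(x-\xi_k)+\sum_{j,k=1}^Np_j(x)p_k(y)\Phi(\xi_j-\xi_k).$$ Set $\beta:=\max\{r-1,(r-1+\alpha)/2\}$ and $\sigma:=\mu-\nu$. Then: (i) if $\mu,\nu\in\mathcal M_\alpha(\mathbb R^d)$, then $\tilde K\in L^1(|\sigma|\otimes|\sigma|)$, so $\mathcal D_{\tilde K}^2(\mu,\nu):=\int\!\!\int\tilde K(x,y)\,\mathrm d\sigma(x)\mathrm d\sigma(y)$ is well defined; (ii) if $\mu,\nu\in\mathcal M_\beta(\mathbb R^d)$, then $K\in L^1(|\sigma|\otimes|\sigma|)$, so $\mathcal D_K^2(\mu,\nu):=\int\!\!\int K(x,y)\,\mathrm d\sigma(x)\mathrm d\sigma(y)$ is well defined; (iii) if $\mu,\nu\in\mathcal M_\alpha(\mathbb R^d)\cap\mathcal M_\beta(\mathbb R^d)$ satisfy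 $\int p\,\mathrm d\mu=\int p\,\mathrm d\nu$ for all $p\in\Pi_{r-1}(\mathbb R^d)$, then $\mathcal D_{\tilde K}^2(\mu,\nu)=\mathcal D_K^2(\mu,\nu)$.
   Context: $\Pi_{r-1}(\mathbb R^d)$: $d$-variate real polynomials of degree $\le r-1$; $\Xi$ is unisolvent if the only $p\in\Pi_{r-1}$ vanishing on $\Xi$ is $p=0$. $\mathrm{CP}_r(\mathbb R^d)$: continuous even $g$ with $\sum_{j,k}a_j\bar a_kg(x_j-x_k)\ge0$ for all $x_1,\dots,x_M$ and all $a\ne0$ with $\sum_ja_jp(x_j)=0$ for all $p\in\Pi_{r-1}(\mathbb R^d)$. It is known that $K$ is then a positive definite kernel. $\mathcal M_\alpha(\mathbb R^d)$: finite signed Radon measures $\mu$ with $\int\|x\|^\alpha\mathrm d|\mu|<\infty$. *)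

theory Defs
  imports "HOL-Analysis.Analysis"
begin

definition poly_space :: "nat \<Rightarrow> ((real^'n::finite) \<Rightarrow> real) set" where
  "poly_space m = {p. \<exists>c :: ('n \<Rightarrow> nat) \<Rightarrow> real. \<forall>x.
      p x = (\<Sum>k\<in>{k::'n\<Rightarrow>nat. sum k UNIV \<le> m}. c k * (\<Prod>i\<in>UNIV. (x$i) ^ k i))}"

definition unisolvent :: "nat \<Rightarrow> nat \<Rightarrow> (nat \<Rightarrow> real^'n::finite) \<Rightarrow> bool" where
  "unisolvent m N xi \<longleftrightarrow>
     (\<forall>p\<in>poly_space m. (\<forall>j<N. p (xi j) = 0) \<longrightarrow> (\<forall>x. p x = 0))"

definition cond_pos_def :: "nat \<Rightarrow> ((real^'n::finite) \<Rightarrow> complex) \<Rightarrow> bool" where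
  "cond_pos_def r g \<longleftrightarrow> continuous_on UNIV g \<and> (\<forall>x. g (- x) = g x) \<and>
     (\<forall>(M::nat) (x :: nat \<Rightarrow> real^'n) (a :: nat \<Rightarrow> complex).
        (\<exists>j<M. a j \<noteq> 0) \<and>
        (\<forall>p\<in>poly_space (r - 1). (\<Sum>j<M. a j * complex_of_real (p (x j))) = 0)
        \<longrightarrow> (\<Sum>j<M. \<Sum>k<M. a j * cnj (a k) * g (x j - x k)) \<in> \<real> \<and>
            0 \<le> Re (\<Sum>j<M. \<Sum>k<M. a j * cnj (a k) * g (x j - x k)))"

text \<open>A finite signed Borel measure is represented as f \<cdot> lam, where lam is a finite
  Borel measure and f \<in> L^1(lam); its total variation is |f| \<cdot> lam.\<close>
definition total_var :: "'a measure \<Rightarrow> ('a \<Rightarrow> real) \<Rightarrow> 'a measure" where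
  "total_var lam f = density lam (\<lambda>x. ennreal \<bar>f x\<bar>)"

definition moment_class :: "real \<Rightarrow> (real^'n::finite) measure \<Rightarrow> (real^'n \<Rightarrow> real) \<Rightarrow> bool" where
  "moment_class a lam f \<longleftrightarrow> integrable (total_var lam f) (\<lambda>x. norm x powr a)"

definition discr2 :: "'a measure \<Rightarrow> ('a \<Rightarrow> real) \<Rightarrow> ('a \<Rightarrow> 'a \<Rightarrow> real) \<Rightarrow> real" where
  "discr2 lam s Ker = (\<integral>z. Ker (fst z) (snd z) * s (fst z) * s (snd z) \<partial>(lam \<Otimes>\<^sub>M lam))"

definition red_kernel :: "((real^'n::finite) \<Rightarrow> real) \<Rightarrow> (nat \<Rightarrow> real^'n \<Rightarrow> real) \<Rightarrow>
    (nat \<Rightarrow> real^'n) \<Rightarrow> nat \<Rightarrow> real^'n \<Rightarrow> real^'n \<Rightarrow> real" where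
  "red_kernel \<Phi> p xi N x y =
     \<Phi> (x - y) - (\<Sum>j<N. p j x * \<Phi> (xi j - y)) - (\<Sum>k<N. p k y * \<Phi> (x - xi k))
     + (\<Sum>j<N. \<Sum>k<N. p j x * p k y * \<Phi> (xi j - xi k))"

end

theory Submission
  imports Defs
begin

lemma prod_integrable:
  fixes a b :: "'a \<Rightarrow> real"
  assumes M: "sigma_finite_measure M" and a: "integrable M a" and b: "integrable M b"
  shows "integrable (M \<Otimes>\<^sub>M M) (\<lambda>z. a (fst z) * b (snd z))"
    and "(\<integral>z. a (fst z) * b (snd z) \<partial>(M \<Otimes>\<^sub>M M)) = (\<integral>x. a x \<partial>M) * (\<integral>x. b x \<partial>M)"
proof -
  interpret pair_sigma_finite M M using M by (simp add: pair_sigma_finite_def)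
  have [measurable]: "a \<in> borel_measurable M" "b \<in> borel_measurable M" using a b by auto
  show I: "integrable (M \<Otimes>\<^sub>M M) (\<lambda>z. a (fst z) * b (snd z))"
  proof (rule Fubini_integrable)
    show "(\<lambda>z. a (fst z) * b (snd z)) \<in> borel_measurable (M \<Otimes>\<^sub>M M)" by measurable
    have "(\<lambda>x. \<integral>y. norm (a (fst (x, y)) * b (snd (x, y))) \<partial>M) = (\<lambda>x. \<bar>a x\<bar> * (\<integral>y. \<bar>b y\<bar> \<partial>M))"
      by (simp add: abs_mult)
    then show "integrable M (\<lambda>x. \<integral>y. norm (a (fst (x, y)) * b (snd (x, y))) \<partial>M)"
      using a by simp
    show "AE x in M. integrable M (\<lambda>y. a (fst (x, y)) * b (snd (x, y)))"
      using b by simp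
  qed
  have "(\<integral>z. a (fst z) * b (snd z) \<partial>(M \<Otimes>\<^sub>M M)) = (\<integral>x. (\<integral>y. a x * b y \<partial>M) \<partial>M)"
    using integral_fst'[OF I] by simp
  also have "\<dots> = (\<integral>x. a x * (\<integral>y. b y \<partial>M) \<partial>M)" by simp
  also have "\<dots> = (\<integral>x. a x \<partial>M) * (\<integral>x. b x \<partial>M)" by simp
  finally show "(\<integral>z. a (fst z) * b (snd z) \<partial>(M \<Otimes>\<^sub>M M)) = (\<integral>x. a x \<partial>M) * (\<integral>x. b x \<partial>M)" .
qed

lemma bound_integrable:
  fixes a b :: "'a \<Rightarrow> real"
  assumes M: "sigma_finite_measure M" and a: "integrable M a" and b: "integrable M b"
    and F: "F \<in> borel_measurable (M \<Otimes>\<^sub>M M)"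
    and bd: "\<And>z. \<bar>F z\<bar> \<le> a (fst z) * b (snd z)"
  shows "integrable (M \<Otimes>\<^sub>M M) F"
proof (rule Bochner_Integration.integrable_bound[OF prod_integrable(1)[OF M a b] F])
  show "AE x in M \<Otimes>\<^sub>M M. norm (F x) \<le> norm (a (fst x) * b (snd x))"
    using bd by (intro AE_I2) (metis abs_ge_self order_trans real_norm_def)
qed

definition mono_fn :: "('n \<Rightarrow> nat) \<Rightarrow> real^'n::finite \<Rightarrow> real" where
  "mono_fn k x = (\<Prod>i\<in>UNIV. (x$i) ^ k i)"

lemma pow_le_1_plus: fixes t :: real assumes "t \<ge> 0" "s \<le> m" shows "t ^ s \<le> 1 + t ^ m"
proof (cases "t \<le> 1")
  case True then have "t ^ s \<le> 1" using assms by (simp add: power_le_one)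
  moreover have "0 \<le> t ^ m" using assms by simp
  ultimately show ?thesis by linarith
next
  case False then have "t ^ s \<le> t ^ m" using assms by (intro power_increasing) auto
  then show ?thesis by simp
qed

lemma mono_bound:
  fixes x :: "real^'n::finite"
  assumes "sum k UNIV \<le> m"
  shows "\<bar>mono_fn k x\<bar> \<le> 1 + norm x ^ m"
proof -
  have "\<bar>mono_fn k x\<bar> = (\<Prod>i\<in>UNIV. \<bar>x$i\<bar> ^ k i)"
    by (simp add: mono_fn_def abs_prod power_abs)
  also have "\<dots> \<le> (\<Prod>i\<in>UNIV. norm x ^ k i)"
    by (intro prod_mono conjI power_mono) (auto simp: component_le_norm_cart)
  also have "\<dots> = norm x ^ sum k UNIV" by (simp add: power_sum)
  also have "\<dots> \<le> 1 + norm x ^ m" using assms by (intro pow_le_1_plus) auto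
  finally show ?thesis .
qed

lemma poly_space_alt: "poly_space m = {p. \<exists>c. \<forall>x. p x = (\<Sum>k\<in>{k. sum k UNIV \<le> m}. c k * mono_fn k x)}"
  unfolding poly_space_def mono_fn_def by simp

lemma poly_growth:
  fixes q :: "real^'n::finite \<Rightarrow> real"
  assumes "q \<in> poly_space m"
  shows "\<exists>c\<ge>0. \<forall>x. \<bar>q x\<bar> \<le> c * (1 + norm x ^ m)"
proof -
  obtain c where c: "\<And>x. q x = (\<Sum>k\<in>{k. sum k UNIV \<le> m}. c k * mono_fn k x)"
    using assms unfolding poly_space_alt by blast
  show ?thesis
  proof (intro exI[of _ "\<Sum>k\<in>{k. sum k UNIV \<le> m}. \<bar>c k\<bar>"] conjI allI)
    show "0 \<le> (\<Sum>k\<in>{k. sum k UNIV \<le> m}. \<bar>c k\<bar>)" by (simp add: sum_nonneg)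
    fix x :: "real^'n"
    have "\<bar>q x\<bar> \<le> (\<Sum>k\<in>{k. sum k UNIV \<le> m}. \<bar>c k * mono_fn k x\<bar>)"
      unfolding c by (rule sum_abs)
    also have "\<dots> \<le> (\<Sum>k\<in>{k. sum k UNIV \<le> m}. \<bar>c k\<bar> * (1 + norm x ^ m))"
      by (intro sum_mono) (auto simp: abs_mult intro!: mult_left_mono mono_bound)
    also have "\<dots> = (\<Sum>k\<in>{k. sum k UNIV \<le> m}. \<bar>c k\<bar>) * (1 + norm x ^ m)"
      by (simp add: sum_distrib_right)
    finally show "\<bar>q x\<bar> \<le> (\<Sum>k\<in>{k. sum k UNIV \<le> m}. \<bar>c k\<bar>) * (1 + norm x ^ m)" .
  qed
qed

lemma poly_space_zero: "(\<lambda>x. 0) \<in> poly_space m"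
  unfolding poly_space_alt by (auto intro!: exI[of _ "\<lambda>k. 0"])

lemma poly_space_add: "p \<in> poly_space m \<Longrightarrow> q \<in> poly_space m \<Longrightarrow> (\<lambda>x. p x + q x) \<in> poly_space m"
proof -
  assume "p \<in> poly_space m" "q \<in> poly_space m"
  then obtain c1 c2 where "\<And>x. p x = (\<Sum>k\<in>{k. sum k UNIV \<le> m}. c1 k * mono_fn k x)"
      "\<And>x. q x = (\<Sum>k\<in>{k. sum k UNIV \<le> m}. c2 k * mono_fn k x)"
    unfolding poly_space_alt by blast
  then show ?thesis unfolding poly_space_alt
    by (auto simp: sum.distrib distrib_right intro!: exI[of _ "\<lambda>k. c1 k + c2 k"])
qed

lemma poly_space_scale: "p \<in> poly_space m \<Longrightarrow> (\<lambda>x. a * p x) \<in> poly_space m"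
proof -
  assume "p \<in> poly_space m"
  then obtain c1 where "\<And>x. p x = (\<Sum>k\<in>{k. sum k UNIV \<le> m}. c1 k * mono_fn k x)"
    unfolding poly_space_alt by blast
  then show ?thesis unfolding poly_space_alt
    by (auto simp: sum_distrib_left mult.assoc intro!: exI[of _ "\<lambda>k. a * c1 k"])
qed

lemma poly_space_diff: "p \<in> poly_space m \<Longrightarrow> q \<in> poly_space m \<Longrightarrow> (\<lambda>x. p x - q x) \<in> poly_space m"
  using poly_space_add[of p m "\<lambda>x. (-1) * q x"] poly_space_scale[of q m "-1"] by simp

lemma poly_space_sum: "(\<forall>j<(n::nat). p j \<in> poly_space m) \<Longrightarrow> (\<lambda>x. \<Sum>j<n. a j * p j x) \<in> poly_space m"
proof (induction n)
  case 0 then show ?case by (simp add: poly_space_zero)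
next
  case (Suc n)
  then show ?case using poly_space_add[OF _ poly_space_scale, of "\<lambda>x. \<Sum>j<n. a j * p j x" m "p n" "a n"]
    by simp
qed

locale kset =
  fixes r N :: nat and \<alpha> C :: real
    and \<Phi> :: "real^'n::finite \<Rightarrow> real"
    and xi :: "nat \<Rightarrow> real^'n" and p :: "nat \<Rightarrow> real^'n \<Rightarrow> real"
  assumes r: "r \<ge> 1" and alpha: "\<alpha> > 0"
    and CP: "cond_pos_def r (\<lambda>x. complex_of_real (\<Phi> x))"
    and growth: "\<forall>x. \<bar>\<Phi> x\<bar> \<le> C * (1 + norm x powr \<alpha>)"
    and unisolv: "unisolvent (r - 1) N xi"
    and p_poly: "\<forall>j<N. p j \<in> poly_space (r - 1)"
    and lagrange: "\<forall>j<N. \<forall>k<N. p j (xi k) = (if j = k then 1 else 0)"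
begin

abbreviation "K \<equiv> red_kernel \<Phi> p xi N"

lemma Phi_even: "\<Phi> (- x) = \<Phi> x"
  using CP unfolding cond_pos_def_def by auto

lemma Phi_cont: "continuous_on UNIV \<Phi>"
  using CP unfolding cond_pos_def_def by auto

lemma reproduce:
  assumes q: "q \<in> poly_space (r - 1)"
  shows "q x = (\<Sum>j<N. q (xi j) * p j x)"
proof -
  let ?h = "\<lambda>x. q x - (\<Sum>j<N. q (xi j) * p j x)"
  have h: "?h \<in> poly_space (r - 1)"
    using poly_space_diff[OF q poly_space_sum[of N p "r - 1" "\<lambda>j. q (xi j)"]] p_poly by simp
  have "\<forall>k<N. ?h (xi k) = 0"
  proof (intro allI impI)
    fix k assume k: "k < N"
    have "(\<Sum>j<N. q (xi j) * p j (xi k)) = (\<Sum>j<N. if j = k then q (xi k) else 0)"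
      using lagrange k by (intro sum.cong) auto
    also have "\<dots> = q (xi k)" using k by simp
    finally show "?h (xi k) = 0" by simp
  qed
  moreover have u: "\<forall>p\<in>poly_space (r-1). (\<forall>j<N. p (xi j) = 0) \<longrightarrow> (\<forall>x. p x = 0)"
    using unisolv unfolding unisolvent_def .
  then have "(\<forall>j<N. ?h (xi j) = 0) \<longrightarrow> (\<forall>x. ?h x = 0)" using h by (rule bspec)
  ultimately have "\<forall>x. ?h x = 0" by blast
  then have "?h x = 0" by (rule spec)
  then show ?thesis by linarith
qed

lemma K_sym: "K x y = K y x"
proof -
  have e1: "\<Phi> (y - x) = \<Phi> (x - y)" using Phi_even[of "x - y"] by simp
  have e2: "\<And>a b. \<Phi> (a - b) = \<Phi> (b - a)" using Phi_even by (metis minus_diff_eq)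
  have "(\<Sum>j<N. \<Sum>k<N. p j y * p k x * \<Phi> (xi j - xi k)) =
        (\<Sum>k<N. \<Sum>j<N. p j y * p k x * \<Phi> (xi j - xi k))" by (rule sum.swap)
  also have "\<dots> = (\<Sum>j<N. \<Sum>k<N. p j x * p k y * \<Phi> (xi j - xi k))"
    by (intro sum.cong refl) (simp add: e2[of "xi _" "xi _"] mult.commute)
  finally have d: "(\<Sum>j<N. \<Sum>k<N. p j y * p k x * \<Phi> (xi j - xi k)) = (\<Sum>j<N. \<Sum>k<N. p j x * p k y * \<Phi> (xi j - xi k))" .
  have s1: "(\<Sum>j<N. p j x * \<Phi> (xi j - y)) = (\<Sum>j<N. p j x * \<Phi> (y - xi j))"
    by (intro sum.cong refl) (simp add: e2[of "xi _" y])
  have s2: "(\<Sum>j<N. p j y * \<Phi> (xi j - x)) = (\<Sum>j<N. p j y * \<Phi> (x - xi j))"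
    by (intro sum.cong refl) (simp add: e2[of "xi _" x])
  show ?thesis unfolding red_kernel_def using e1 d s1 s2 by simp
qed

lemma sum_lin2:
  fixes f g h :: "'a \<Rightarrow> real"
  assumes "\<And>j. j \<in> A \<Longrightarrow> f j = a * g j + b * h j"
  shows "sum f A = a * sum g A + b * sum h A"
proof -
  have "sum f A = sum (\<lambda>j. a * g j + b * h j) A" using assms by (rule sum.cong[OF refl])
  then show ?thesis by (simp add: sum.distrib sum_distrib_left)
qed

lemma sum_lin4:
  fixes f g1 g2 g3 g4 :: "'a \<Rightarrow> 'b \<Rightarrow> real"
  assumes "\<And>j l. f j l = a1 * g1 j l + a2 * g2 j l + a3 * g3 j l + a4 * g4 j l"
  shows "(\<Sum>j\<in>A. \<Sum>l\<in>B. f j l) = a1 * (\<Sum>j\<in>A. \<Sum>l\<in>B. g1 j l) + a2 * (\<Sum>j\<in>A. \<Sum>l\<in>B. g2 j l)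
     + a3 * (\<Sum>j\<in>A. \<Sum>l\<in>B. g3 j l) + a4 * (\<Sum>j\<in>A. \<Sum>l\<in>B. g4 j l)"
  using assms by (simp add: sum.distrib sum_distrib_left)

lemma quad_nonneg:
  fixes s t :: real
  shows "s^2 * K x x + 2 * s * t * K x y + t^2 * K y y \<ge> 0"
proof -
  define z where "z = (\<lambda>u::nat. if u = 0 then x else if u = 1 then y else xi (u - 2))"
  define b where "b = (\<lambda>j. - (s * p j x + t * p j y))"
  define c where "c = (\<lambda>u::nat. if u = 0 then s else if u = 1 then t else b (u - 2))"
  have sumexp: "(\<Sum>u<Suc (Suc N). F u) = F 0 + F 1 + (\<Sum>j<N. F (Suc (Suc j)))" for F :: "nat \<Rightarrow> 'b::comm_monoid_add"
    by (simp only: sum.lessThan_Suc_shift) (simp add: add.assoc)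
  have zs: "z 0 = x" "z (Suc 0) = y" "z 1 = y" "z (Suc (Suc j)) = xi j" for j by (auto simp: z_def)
  have cs: "c 0 = s" "c (Suc 0) = t" "c 1 = t" "c (Suc (Suc j)) = b j" for j by (auto simp: c_def)
  define Q where "Q = (\<Sum>u<Suc (Suc N). \<Sum>v<Suc (Suc N). c u * c v * \<Phi> (z u - z v))"
  have "Q \<ge> 0"
  proof (cases "\<exists>j<Suc (Suc N). complex_of_real (c j) \<noteq> 0")
    case False
    then have "\<forall>u<Suc (Suc N). c u = 0" by auto
    then show ?thesis unfolding Q_def by simp
  next
    case True
    have orth: "(\<Sum>j<Suc (Suc N). complex_of_real (c j) * complex_of_real (q (z j))) = 0"
      if q: "q \<in> poly_space (r - 1)" for q
    proof -
      have "(\<Sum>j<N. b j * q (xi j)) = (\<Sum>j<N. (- (s * (q (xi j) * p j x))) + (- (t * (q (xi j) * p j y))))"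
        unfolding b_def by (intro sum.cong) (auto simp: algebra_simps)
      also have "\<dots> = - (s * (\<Sum>j<N. q (xi j) * p j x) + t * (\<Sum>j<N. q (xi j) * p j y))"
        by (simp only: sum.distrib sum_negf sum_distrib_left)
      also have "\<dots> = - (s * q x + t * q y)" by (simp only: reproduce[OF q, of x, symmetric] reproduce[OF q, of y, symmetric])
      finally have "s * q x + t * q y + (\<Sum>j<N. b j * q (xi j)) = 0" by simp
      then have "(\<Sum>j<Suc (Suc N). c j * q (z j)) = 0"
        by (subst sumexp) (simp add: zs cs)
      then have "complex_of_real (\<Sum>j<Suc (Suc N). c j * q (z j)) = 0" by simp
      then show ?thesis by simp
    qed
    have "0 \<le> Re (\<Sum>j<Suc (Suc N). \<Sum>k<Suc (Suc N). complex_of_real (c j) * cnj (complex_of_real (c k)) * complex_of_real (\<Phi> (z j - z k)))"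
      using CP[unfolded cond_pos_def_def, THEN conjunct2, THEN conjunct2, rule_format,
         where M="Suc (Suc N)" and x=z and a="\<lambda>u. complex_of_real (c u)"] True orth by blast
    also have "(\<Sum>j<Suc (Suc N). \<Sum>k<Suc (Suc N). complex_of_real (c j) * cnj (complex_of_real (c k)) * complex_of_real (\<Phi> (z j - z k)))
        = complex_of_real Q" unfolding Q_def by simp
    finally show ?thesis by simp
  qed
  have e2: "\<And>a b. \<Phi> (a - b) = \<Phi> (b - a)" using Phi_even by (metis minus_diff_eq)
  have Q1: "Q = (s * s * \<Phi>(x-x) + s * t * \<Phi>(x-y) + (\<Sum>l<N. s * b l * \<Phi>(x - xi l)))
     + (t * s * \<Phi>(y-x) + t * t * \<Phi>(y-y) + (\<Sum>l<N. t * b l * \<Phi>(y - xi l)))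
     + (\<Sum>j<N. b j * s * \<Phi>(xi j - x) + b j * t * \<Phi>(xi j - y) + (\<Sum>l<N. b j * b l * \<Phi>(xi j - xi l)))"
    unfolding Q_def by (simp only: sumexp zs cs)
  have g1: "(\<Sum>l<N. s * b l * \<Phi>(x - xi l)) = (-s * s) * (\<Sum>l<N. p l x * \<Phi>(x - xi l)) + (-s * t) * (\<Sum>l<N. p l y * \<Phi>(x - xi l))"
    by (rule sum_lin2) (simp add: b_def algebra_simps)
  have g2: "(\<Sum>l<N. t * b l * \<Phi>(y - xi l)) = (-t * s) * (\<Sum>l<N. p l x * \<Phi>(y - xi l)) + (-t * t) * (\<Sum>l<N. p l y * \<Phi>(y - xi l))"
    by (rule sum_lin2) (simp add: b_def algebra_simps)
  have g3: "(\<Sum>j<N. b j * s * \<Phi>(xi j - x) + b j * t * \<Phi>(xi j - y) + (\<Sum>l<N. b j * b l * \<Phi>(xi j - xi l)))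
     = (\<Sum>j<N. b j * s * \<Phi>(xi j - x)) + (\<Sum>j<N. b j * t * \<Phi>(xi j - y)) + (\<Sum>j<N. \<Sum>l<N. b j * b l * \<Phi>(xi j - xi l))"
    by (simp add: sum.distrib)
  have g4: "(\<Sum>j<N. b j * s * \<Phi>(xi j - x)) = (-s * s) * (\<Sum>j<N. p j x * \<Phi>(xi j - x)) + (-s * t) * (\<Sum>j<N. p j y * \<Phi>(xi j - x))"
    by (rule sum_lin2) (simp add: b_def algebra_simps)
  have g5: "(\<Sum>j<N. b j * t * \<Phi>(xi j - y)) = (-t * s) * (\<Sum>j<N. p j x * \<Phi>(xi j - y)) + (-t * t) * (\<Sum>j<N. p j y * \<Phi>(xi j - y))"
    by (rule sum_lin2) (simp add: b_def algebra_simps)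
  have g6: "(\<Sum>j<N. \<Sum>l<N. b j * b l * \<Phi>(xi j - xi l)) =
      (s * s) * (\<Sum>j<N. \<Sum>l<N. p j x * p l x * \<Phi>(xi j - xi l)) + (s * t) * (\<Sum>j<N. \<Sum>l<N. p j x * p l y * \<Phi>(xi j - xi l))
    + (t * s) * (\<Sum>j<N. \<Sum>l<N. p j y * p l x * \<Phi>(xi j - xi l)) + (t * t) * (\<Sum>j<N. \<Sum>l<N. p j y * p l y * \<Phi>(xi j - xi l))"
    by (rule sum_lin4) (simp add: b_def algebra_simps)
  have "Q = s^2 * K x x + s * t * K x y + t * s * K y x + t^2 * K y y"
    unfolding Q1 g1 g2 g3 g4 g5 g6 red_kernel_def power2_eq_square
    by (simp add: algebra_simps)
  moreover have "s * t * K x y + t * s * K y x = 2 * s * t * K x y" using K_sym[of y x] by simp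
  ultimately show ?thesis using \<open>Q \<ge> 0\<close> by linarith
qed

end

lemma powr_le_1_plus:
  fixes t :: real assumes t: "t \<ge> 0" and e: "0 \<le> e" "e \<le> E"
  shows "t powr e \<le> 1 + t powr E"
proof (cases "t \<le> 1")
  case True
  then have "t powr e \<le> 1" using t e by (intro powr_le1) auto
  then show ?thesis using powr_ge_zero[of t E] by linarith
next
  case False
  then have "t powr e \<le> t powr E" using e by (intro powr_mono) auto
  then show ?thesis by linarith
qed

lemma pow_le_powr:
  fixes t :: real assumes t: "t \<ge> 0" and e: "real n \<le> E"
  shows "t ^ n \<le> 1 + t powr E"
proof (cases "t = 0")
  case True then show ?thesis by (cases n) auto
next
  case False
  then have "t ^ n = t powr (real n)" using t by (simp add: powr_realpow)
  also have "\<dots> \<le> 1 + t powr E" using t e by (intro powr_le_1_plus) auto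
  finally show ?thesis .
qed

lemma sum_powr_le:
  fixes a b \<alpha> :: real assumes "a \<ge> 0" "b \<ge> 0" "\<alpha> \<ge> 0"
  shows "(a + b) powr \<alpha> \<le> 2 powr \<alpha> * (a powr \<alpha> + b powr \<alpha>)"
proof -
  have "(a + b) powr \<alpha> \<le> (2 * max a b) powr \<alpha>"
    using assms by (intro powr_mono2) auto
  also have "\<dots> = 2 powr \<alpha> * max a b powr \<alpha>" using assms by (simp add: powr_mult)
  also have "max a b powr \<alpha> \<le> a powr \<alpha> + b powr \<alpha>"
    by (cases "a \<le> b") (auto simp: max_def)
  then have "2 powr \<alpha> * max a b powr \<alpha> \<le> 2 powr \<alpha> * (a powr \<alpha> + b powr \<alpha>)"
    by (intro mult_left_mono) auto
  finally show ?thesis .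
qed

context kset begin

definition "\<beta> = max (real r - 1) ((real r - 1 + \<alpha>) / 2)"
definition "w x = 1 + norm x powr \<beta>"
definition "wa x = 1 + norm x powr \<alpha>"

lemma beta_ge: "real r - 1 \<le> \<beta>" "real r - 1 + \<alpha> \<le> 2 * \<beta>" "\<alpha> \<le> 2 * \<beta>" "0 \<le> \<beta>"
proof -
  have r1: "real r \<ge> 1" using r by simp
  have a: "real r - 1 \<le> \<beta>" "(real r - 1 + \<alpha>) / 2 \<le> \<beta>" unfolding \<beta>_def by auto
  show "real r - 1 \<le> \<beta>" using a by linarith
  show b2: "real r - 1 + \<alpha> \<le> 2 * \<beta>" using a(2) by (simp add: divide_le_eq mult.commute)
  show "\<alpha> \<le> 2 * \<beta>" using b2 r1 by linarith
  show "0 \<le> \<beta>" using a r1 by linarith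
qed

lemma w_pos: "w x \<ge> 1" unfolding w_def by simp
lemma wa_pos: "wa x \<ge> 1" unfolding wa_def by simp

lemma C_nonneg: "C \<ge> 0"
  using growth[rule_format, of 0] by simp

lemma Phi_diff_bound: "\<bar>\<Phi> (x - y)\<bar> \<le> C * (1 + 2 powr \<alpha>) * wa x * wa y"
proof -
  define X where "X = norm x powr \<alpha>"
  define Y where "Y = norm y powr \<alpha>"
  define P where "P = 2 powr \<alpha>"
  have nn: "X \<ge> 0" "Y \<ge> 0" "P \<ge> 0" unfolding X_def Y_def P_def by auto
  have "norm (x - y) powr \<alpha> \<le> (norm x + norm y) powr \<alpha>"
    using alpha by (intro powr_mono2) (auto simp: norm_triangle_ineq4)
  also have "\<dots> \<le> P * (X + Y)" unfolding P_def X_def Y_def using alpha by (intro sum_powr_le) auto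
  finally have h: "norm (x - y) powr \<alpha> \<le> P * (X + Y)" .
  have "\<bar>\<Phi> (x - y)\<bar> \<le> C * (1 + norm (x - y) powr \<alpha>)" using growth by blast
  also have "\<dots> \<le> C * (1 + P * (X + Y))" using h C_nonneg by (intro mult_left_mono) auto
  also have "\<dots> \<le> C * ((1 + P) * (1 + X) * (1 + Y))"
  proof (intro mult_left_mono C_nonneg)
    have "0 \<le> X * Y" "0 \<le> P * X * Y" "0 \<le> P * X" "0 \<le> P * Y" using nn by auto
    then show "1 + P * (X + Y) \<le> (1 + P) * (1 + X) * (1 + Y)"
      using nn by (simp add: algebra_simps)
  qed
  finally show ?thesis unfolding wa_def X_def Y_def P_def by (simp add: mult.assoc)
qed

lemma p_bound: "\<exists>cp\<ge>0. \<forall>j<N. \<forall>x. \<bar>p j x\<bar> \<le> cp * (1 + norm x ^ (r - 1))"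
proof -
  have "\<forall>j. \<exists>c. j < N \<longrightarrow> c \<ge> 0 \<and> (\<forall>x. \<bar>p j x\<bar> \<le> c * (1 + norm x ^ (r - 1)))"
    using p_poly poly_growth by blast
  then obtain cf where cf: "\<And>j. j < N \<Longrightarrow> cf j \<ge> 0 \<and> (\<forall>x. \<bar>p j x\<bar> \<le> cf j * (1 + norm x ^ (r - 1)))"
    by metis
  show ?thesis
  proof (intro exI[of _ "\<Sum>j<N. cf j"] conjI allI impI)
    show "0 \<le> (\<Sum>j<N. cf j)" using cf by (intro sum_nonneg) auto
    fix j and x :: "real^'n" assume j: "j < N"
    have "cf j \<le> (\<Sum>j<N. cf j)" using cf j by (intro member_le_sum) auto
    then have "cf j * (1 + norm x ^ (r - 1)) \<le> (\<Sum>j<N. cf j) * (1 + norm x ^ (r - 1))"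
      by (intro mult_right_mono) auto
    then show "\<bar>p j x\<bar> \<le> (\<Sum>j<N. cf j) * (1 + norm x ^ (r - 1))" using cf[OF j] order_trans by blast
  qed
qed

lemma mix1: assumes t: "t \<ge> 0" shows "1 + t ^ (r - 1) \<le> 2 * (1 + t powr \<beta>)"
proof -
  have rb: "real (r - 1) \<le> \<beta>" using beta_ge r by (simp add: of_nat_diff)
  have "t ^ (r - 1) \<le> 1 + t powr \<beta>" using t rb by (rule pow_le_powr)
  then show ?thesis using powr_ge_zero[of t \<beta>] unfolding distrib_left by linarith
qed

lemma sq_powr: "(t powr \<beta>)^2 = t powr (2 * \<beta>)"
proof -
  have "t powr (2 * \<beta>) = t powr (\<beta> + \<beta>)" by (metis mult_2)
  also have "\<dots> = t powr \<beta> * t powr \<beta>" by (rule powr_add)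
  finally show ?thesis by (simp only: power2_eq_square)
qed

lemma mix2: assumes t: "t \<ge> 0" shows "(1 + t ^ (r - 1)) * (1 + t powr \<alpha>) \<le> 4 * (1 + t powr \<beta>)^2"
proof -
  define W where "W = t powr \<beta>"
  have W0: "W \<ge> 0" unfolding W_def by simp
  have rb: "real (r - 1) \<le> \<beta>" using beta_ge r by (simp add: of_nat_diff)
  have a1: "t ^ (r - 1) \<le> 1 + W" unfolding W_def using t rb by (rule pow_le_powr)
  have a2: "t powr \<alpha> \<le> 1 + W^2" unfolding W_def sq_powr using t alpha beta_ge
    by (intro powr_le_1_plus) auto
  have a3: "t ^ (r - 1) * t powr \<alpha> \<le> 1 + W^2"
  proof (cases "t = 0")
    case True then show ?thesis by simp
  next
    case False
    then have "t ^ (r - 1) * t powr \<alpha> = t powr (real (r - 1) + \<alpha>)"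
      using t by (simp add: powr_add powr_realpow)
    also have "\<dots> \<le> 1 + W^2" unfolding W_def sq_powr using t alpha beta_ge r
      by (intro powr_le_1_plus) (auto simp: of_nat_diff)
    finally show ?thesis .
  qed
  have "(1 + t ^ (r - 1)) * (1 + t powr \<alpha>) = 1 + t ^ (r - 1) + t powr \<alpha> + t ^ (r - 1) * t powr \<alpha>"
    by (simp add: algebra_simps)
  also have "\<dots> \<le> 4 + W + 2 * W^2" using a1 a2 a3 by linarith
  also have "\<dots> \<le> 4 * (1 + W)^2" using W0 by (simp add: power2_eq_square algebra_simps)
  finally show ?thesis unfolding W_def .
qed

lemma K_diag_bound: "\<exists>cK\<ge>0. \<forall>x. K x x \<le> cK * (w x)^2"
proof -
  obtain cp where cp0: "cp \<ge> 0" and cp: "\<And>j x. j < N \<Longrightarrow> \<bar>p j x\<bar> \<le> cp * (1 + norm x ^ (r - 1))"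
    using p_bound by blast
  define A where "A = C * (1 + 2 powr \<alpha>)"
  define R where "R = (\<Sum>j<N. wa (xi j))"
  have A0: "A \<ge> 0" unfolding A_def using C_nonneg by simp
  have waR: "wa (xi j) \<le> R" if "j < N" for j
    unfolding R_def using that wa_pos by (intro member_le_sum) (auto intro: order_trans[OF zero_le_one])
  have R0: "R \<ge> 0" unfolding R_def using wa_pos by (intro sum_nonneg) (auto intro: order_trans[OF zero_le_one])
  have ph1: "\<bar>\<Phi> (xi j - x)\<bar> \<le> A * R * wa x" if "j < N" for j x
  proof -
    have "\<bar>\<Phi> (xi j - x)\<bar> \<le> A * wa (xi j) * wa x" using Phi_diff_bound unfolding A_def .
    also have "\<dots> \<le> A * R * wa x" using waR[OF that] A0 wa_pos[of x]
      by (intro mult_right_mono mult_left_mono) auto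
    finally show ?thesis .
  qed
  have ph2: "\<bar>\<Phi> (x - xi j)\<bar> \<le> A * R * wa x" if "j < N" for j x
  proof -
    have "\<bar>\<Phi> (x - xi j)\<bar> \<le> A * wa x * wa (xi j)" using Phi_diff_bound unfolding A_def .
    also have "\<dots> \<le> A * wa x * R" using waR[OF that] A0 wa_pos[of x]
      by (intro mult_left_mono) auto
    finally show ?thesis by (simp add: mult_ac)
  qed
  have ph3: "\<bar>\<Phi> (xi j - xi k)\<bar> \<le> A * R * R" if "j < N" "k < N" for j k
  proof -
    have "\<bar>\<Phi> (xi j - xi k)\<bar> \<le> A * wa (xi j) * wa (xi k)" using Phi_diff_bound unfolding A_def .
    also have "\<dots> \<le> A * R * R" using waR[OF that(1)] waR[OF that(2)] A0 wa_pos[of "xi j"] wa_pos[of "xi k"]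
      by (intro mult_mono) (auto intro: mult_nonneg_nonneg)
    finally show ?thesis .
  qed
  define cK where "cK = \<bar>\<Phi> 0\<bar> + real N * (4 * cp * A * R) + real N * (4 * cp * A * R) + real N * (real N * (4 * cp * cp * A * R * R))"
  show ?thesis
  proof (intro exI[of _ cK] conjI allI)
    show "cK \<ge> 0" unfolding cK_def using cp0 A0 R0 by simp
    fix x :: "real^'n"
    define t where "t = norm x"
    have t0: "t \<ge> 0" unfolding t_def by simp
    have w1: "1 \<le> (w x)^2" using w_pos[of x] by (simp add: one_le_power)
    have m1: "(1 + t ^ (r - 1)) * wa x \<le> 4 * (w x)^2" unfolding wa_def w_def t_def using mix2 by simp
    have m2: "(1 + t ^ (r - 1)) * (1 + t ^ (r - 1)) \<le> 4 * (w x)^2"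
    proof -
      have "1 + t ^ (r - 1) \<le> 2 * w x" unfolding w_def t_def using mix1 by simp
      moreover have "0 \<le> 1 + t ^ (r - 1)" using t0 by simp
      ultimately have "(1 + t ^ (r - 1)) * (1 + t ^ (r - 1)) \<le> (2 * w x) * (2 * w x)"
        by (intro mult_mono) auto
      then show ?thesis by (simp add: power2_eq_square)
    qed
    have pt: "\<bar>p j x\<bar> \<le> cp * (1 + t ^ (r - 1))" if "j < N" for j unfolding t_def using cp[OF that] .
    have T1: "\<bar>p j x * \<Phi> (xi j - x)\<bar> \<le> 4 * cp * A * R * (w x)^2" if j: "j < N" for j
    proof -
      have "\<bar>p j x * \<Phi> (xi j - x)\<bar> \<le> (cp * (1 + t ^ (r - 1))) * (A * R * wa x)"
        unfolding abs_mult using pt[OF j] ph1[OF j] by (intro mult_mono) auto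
      also have "\<dots> = cp * A * R * ((1 + t ^ (r - 1)) * wa x)" by (simp add: mult_ac)
      also have "\<dots> \<le> cp * A * R * (4 * (w x)^2)" using m1 cp0 A0 R0 by (intro mult_left_mono) auto
      finally show ?thesis by (simp add: mult_ac)
    qed
    have T2: "\<bar>p j x * \<Phi> (x - xi j)\<bar> \<le> 4 * cp * A * R * (w x)^2" if j: "j < N" for j
    proof -
      have "\<bar>p j x * \<Phi> (x - xi j)\<bar> \<le> (cp * (1 + t ^ (r - 1))) * (A * R * wa x)"
        unfolding abs_mult using pt[OF j] ph2[OF j] by (intro mult_mono) auto
      also have "\<dots> = cp * A * R * ((1 + t ^ (r - 1)) * wa x)" by (simp add: mult_ac)
      also have "\<dots> \<le> cp * A * R * (4 * (w x)^2)" using m1 cp0 A0 R0 by (intro mult_left_mono) auto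
      finally show ?thesis by (simp add: mult_ac)
    qed
    have T3: "\<bar>p j x * p k x * \<Phi> (xi j - xi k)\<bar> \<le> 4 * cp * cp * A * R * R * (w x)^2" if j: "j < N" and k: "k < N" for j k
    proof -
      have "\<bar>p j x * p k x * \<Phi> (xi j - xi k)\<bar> \<le> ((cp * (1 + t ^ (r - 1))) * (cp * (1 + t ^ (r - 1)))) * (A * R * R)"
        unfolding abs_mult using pt[OF j] pt[OF k] ph3[OF j k] by (intro mult_mono) auto
      also have "\<dots> = cp * cp * A * R * R * ((1 + t ^ (r - 1)) * (1 + t ^ (r - 1)))" by (simp add: mult_ac)
      also have "\<dots> \<le> cp * cp * A * R * R * (4 * (w x)^2)" using m2 cp0 A0 R0 by (intro mult_left_mono) auto
      finally show ?thesis by (simp add: mult_ac)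
    qed
    have S1: "\<bar>\<Sum>j<N. p j x * \<Phi> (xi j - x)\<bar> \<le> real N * (4 * cp * A * R) * (w x)^2"
    proof -
      have "\<bar>\<Sum>j<N. p j x * \<Phi> (xi j - x)\<bar> \<le> (\<Sum>j<N. \<bar>p j x * \<Phi> (xi j - x)\<bar>)" by (rule sum_abs)
      also have "\<dots> \<le> of_nat (card {..<N}) * (4 * cp * A * R * (w x)^2)" using T1 by (intro sum_bounded_above) auto
      finally show ?thesis by (simp add: mult_ac)
    qed
    have S2: "\<bar>\<Sum>j<N. p j x * \<Phi> (x - xi j)\<bar> \<le> real N * (4 * cp * A * R) * (w x)^2"
    proof -
      have "\<bar>\<Sum>j<N. p j x * \<Phi> (x - xi j)\<bar> \<le> (\<Sum>j<N. \<bar>p j x * \<Phi> (x - xi j)\<bar>)" by (rule sum_abs)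
      also have "\<dots> \<le> of_nat (card {..<N}) * (4 * cp * A * R * (w x)^2)" using T2 by (intro sum_bounded_above) auto
      finally show ?thesis by (simp add: mult_ac)
    qed
    have S3: "\<bar>\<Sum>j<N. \<Sum>k<N. p j x * p k x * \<Phi> (xi j - xi k)\<bar> \<le> real N * (real N * (4 * cp * cp * A * R * R)) * (w x)^2"
    proof -
      have "\<bar>\<Sum>j<N. \<Sum>k<N. p j x * p k x * \<Phi> (xi j - xi k)\<bar> \<le> (\<Sum>j<N. \<bar>\<Sum>k<N. p j x * p k x * \<Phi> (xi j - xi k)\<bar>)" by (rule sum_abs)
      also have "\<dots> \<le> of_nat (card {..<N}) * (of_nat (card {..<N}) * (4 * cp * cp * A * R * R * (w x)^2))"
      proof (intro sum_bounded_above)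
        fix j assume "j \<in> {..<N}"
        then have j: "j < N" by simp
        have "\<bar>\<Sum>k<N. p j x * p k x * \<Phi> (xi j - xi k)\<bar> \<le> (\<Sum>k<N. \<bar>p j x * p k x * \<Phi> (xi j - xi k)\<bar>)" by (rule sum_abs)
        also have "\<dots> \<le> of_nat (card {..<N}) * (4 * cp * cp * A * R * R * (w x)^2)" using T3[OF j] by (intro sum_bounded_above) auto
        finally show "\<bar>\<Sum>k<N. p j x * p k x * \<Phi> (xi j - xi k)\<bar> \<le> of_nat (card {..<N}) * (4 * cp * cp * A * R * R * (w x)^2)" .
      qed
      finally show ?thesis by (simp add: mult_ac)
    qed
    have S0: "\<bar>\<Phi> 0\<bar> \<le> \<bar>\<Phi> 0\<bar> * (w x)^2" using w1 by (simp add: mult_le_cancel_left1)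
    have "K x x \<le> \<bar>\<Phi> (x - x)\<bar> + \<bar>\<Sum>j<N. p j x * \<Phi> (xi j - x)\<bar> + \<bar>\<Sum>j<N. p j x * \<Phi> (x - xi j)\<bar>
        + \<bar>\<Sum>j<N. \<Sum>k<N. p j x * p k x * \<Phi> (xi j - xi k)\<bar>"
      unfolding red_kernel_def by linarith
    also have "\<dots> \<le> cK * (w x)^2" using S0 S1 S2 S3 unfolding cK_def by (simp add: algebra_simps)
    finally show "K x x \<le> cK * (w x)^2" .
  qed
qed

lemma K_bound: "\<exists>cK\<ge>0. \<forall>x y. \<bar>K x y\<bar> \<le> cK * w x * w y"
proof -
  obtain cK where cK0: "cK \<ge> 0" and cK: "\<And>x. K x x \<le> cK * (w x)^2" using K_diag_bound by blast
  show ?thesis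
  proof (intro exI[of _ cK] conjI allI)
    show "0 \<le> cK" by (rule cK0)
    fix x y :: "real^'n"
    define u where "u = w x * w y"
    have u0: "u > 0" unfolding u_def using w_pos[of x] w_pos[of y] by (simp add: mult_pos_pos)
    have B: "(w y)^2 * K x x + (w x)^2 * K y y \<le> 2 * cK * u^2"
    proof -
      have "(w y)^2 * K x x \<le> (w y)^2 * (cK * (w x)^2)" using cK[of x] by (intro mult_left_mono) auto
      moreover have "(w x)^2 * K y y \<le> (w x)^2 * (cK * (w y)^2)" using cK[of y] by (intro mult_left_mono) auto
      ultimately show ?thesis unfolding u_def by (simp add: algebra_simps power2_eq_square)
    qed
    have q1: "0 \<le> (w y)^2 * K x x + 2 * (w y) * (w x) * K x y + (w x)^2 * K y y"
      using quad_nonneg[of "w y" x "w x" y] .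
    have q2: "0 \<le> (w y)^2 * K x x + 2 * (w y) * (- w x) * K x y + (- w x)^2 * K y y"
      using quad_nonneg[of "w y" x "- w x" y] .
    define Sm where "Sm = (w y)^2 * K x x + (w x)^2 * K y y"
    have B': "Sm \<le> 2 * (cK * u^2)" using B unfolding Sm_def by simp
    have q1': "0 \<le> Sm + 2 * (u * K x y)" using q1 unfolding Sm_def u_def by (simp add: algebra_simps)
    have q2': "0 \<le> Sm - 2 * (u * K x y)" using q2 unfolding Sm_def u_def by (simp add: algebra_simps)
    have "u * K x y \<le> cK * u^2" "- (u * K x y) \<le> cK * u^2" using q1' q2' B' by linarith+
    then have "\<bar>u * K x y\<bar> \<le> cK * u^2" by linarith
    then have "u * \<bar>K x y\<bar> \<le> u * (cK * u)" using u0 by (simp add: abs_mult power2_eq_square mult_ac)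
    then have "\<bar>K x y\<bar> \<le> cK * u" using u0 by (simp add: mult_le_cancel_left_pos)
    then show "\<bar>K x y\<bar> \<le> cK * w x * w y" unfolding u_def by (simp add: mult.assoc)
  qed
qed

end

lemma meas_lift: "sets M = sets borel \<Longrightarrow> continuous_on UNIV f \<Longrightarrow> (f::'a::topological_space \<Rightarrow> real) \<in> borel_measurable M"
  using borel_measurable_continuous_onI measurable_cong_sets by blast

lemma meas_lift2:
  fixes F :: "('a::second_countable_topology \<times> 'a) \<Rightarrow> real"
  assumes "sets M = sets borel" "continuous_on UNIV F"
  shows "F \<in> borel_measurable (M \<Otimes>\<^sub>M M)"
proof -
  have "F \<in> borel_measurable borel" using assms(2) by (rule borel_measurable_continuous_onI)
  then have "F \<in> borel_measurable (borel \<Otimes>\<^sub>M borel)" by (simp add: borel_prod)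
  moreover have "sets (M \<Otimes>\<^sub>M M) = sets (borel \<Otimes>\<^sub>M borel)"
    using assms(1) by (intro sets_pair_measure_cong) auto
  ultimately show ?thesis using measurable_cong_sets by blast
qed

context kset begin

lemma Phi_cont' [continuous_intros]: "continuous_on S h \<Longrightarrow> continuous_on S (\<lambda>x. \<Phi> (h x))"
  using continuous_on_compose2[OF Phi_cont] by blast

lemma p_cont: assumes "j < N" shows "continuous_on UNIV (p j)"
proof -
  obtain c where c: "\<And>x. p j x = (\<Sum>k\<in>{k. sum k UNIV \<le> r - 1}. c k * mono_fn k x)"
    using p_poly assms unfolding poly_space_alt by blast
  have e: "p j = (\<lambda>x. \<Sum>k\<in>{k. sum k UNIV \<le> r - 1}. c k * mono_fn k x)" using c by auto
  have "continuous_on UNIV (\<lambda>x. \<Sum>k\<in>{k. sum k UNIV \<le> r - 1}. c k * mono_fn k x)" unfolding mono_fn_def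
    by (intro continuous_intros)
  then show ?thesis using e by simp
qed

lemma p_cont' [continuous_intros]: "j < N \<Longrightarrow> continuous_on S h \<Longrightarrow> continuous_on S (\<lambda>x. p j (h x))"
  using continuous_on_compose2[OF p_cont] by blast

lemma K_cont: "continuous_on UNIV (\<lambda>z. K (fst z) (snd z))"
  unfolding red_kernel_def by (intro continuous_intros) auto

lemma Kt_cont: "continuous_on UNIV (\<lambda>z. \<Phi> (fst z - snd z))"
  by (intro continuous_intros)

end

locale kset2 = kset r N \<alpha> C \<Phi> xi p
  for r N :: nat and \<alpha> C :: real and \<Phi> :: "real^'n::finite \<Rightarrow> real"
    and xi :: "nat \<Rightarrow> real^'n" and p :: "nat \<Rightarrow> real^'n \<Rightarrow> real" +
  fixes lam :: "(real^'n) measure" and f g :: "real^'n \<Rightarrow> real"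
  assumes lam_fin: "finite_measure lam" and lam_sets: "sets lam = sets borel"
    and f_int: "integrable lam f" and g_int: "integrable lam g"
begin

definition "\<sigma> x = f x - g x"

lemma meas_lam: "continuous_on UNIV h \<Longrightarrow> (h :: real^'n \<Rightarrow> real) \<in> borel_measurable lam"
  using meas_lift[OF lam_sets] .

lemma f_meas[measurable]: "f \<in> borel_measurable lam" using f_int by auto
lemma g_meas[measurable]: "g \<in> borel_measurable lam" using g_int by auto
lemma sig_meas[measurable]: "\<sigma> \<in> borel_measurable lam" unfolding \<sigma>_def by measurable
lemma sig_int: "integrable lam \<sigma>" unfolding \<sigma>_def using f_int g_int by auto

lemma norm_powr_meas[measurable]: "(\<lambda>x. norm x powr a) \<in> borel_measurable lam"
proof -
  have "(\<lambda>x::real^'n. norm x powr a) \<in> borel_measurable borel" by measurable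
  then show ?thesis using measurable_cong_sets[OF lam_sets refl] by blast
qed

lemma mom_iff:
  assumes [measurable]: "h \<in> borel_measurable lam" "\<phi> \<in> borel_measurable lam"
  shows "integrable (total_var lam h) \<phi> \<longleftrightarrow> integrable lam (\<lambda>x. \<bar>h x\<bar> * \<phi> x)"
  unfolding total_var_def by (subst integrable_density) auto

lemma weight_int:
  assumes hi: "integrable lam h" and m: "integrable lam (\<lambda>x. \<bar>h x\<bar> * norm x powr a)"
  shows "integrable lam (\<lambda>x. (1 + norm x powr a) * \<bar>h x\<bar>)"
proof -
  have "integrable lam (\<lambda>x. \<bar>h x\<bar> + \<bar>h x\<bar> * norm x powr a)" using hi m by auto
  then show ?thesis by (simp add: algebra_simps)
qed

lemma sig_mom:
  assumes "moment_class a lam f" "moment_class a lam g"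
  shows "integrable lam (\<lambda>x. \<bar>\<sigma> x\<bar> * norm x powr a)"
proof -
  have "integrable lam (\<lambda>x. \<bar>f x\<bar> * norm x powr a)" "integrable lam (\<lambda>x. \<bar>g x\<bar> * norm x powr a)"
    using assms unfolding moment_class_def by (simp_all add: mom_iff)
  then have "integrable lam (\<lambda>x. \<bar>f x\<bar> * norm x powr a + \<bar>g x\<bar> * norm x powr a)" by auto
  then show ?thesis
  proof (rule Bochner_Integration.integrable_bound)
    show "(\<lambda>x. \<bar>\<sigma> x\<bar> * norm x powr a) \<in> borel_measurable lam" by measurable
    show "AE x in lam. norm (\<bar>\<sigma> x\<bar> * norm x powr a) \<le> norm (\<bar>f x\<bar> * norm x powr a + \<bar>g x\<bar> * norm x powr a)"
    proof (intro AE_I2)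
      fix x
      have "\<bar>\<sigma> x\<bar> * norm x powr a \<le> (\<bar>f x\<bar> + \<bar>g x\<bar>) * norm x powr a"
        unfolding \<sigma>_def by (intro mult_right_mono) auto
      then show "norm (\<bar>\<sigma> x\<bar> * norm x powr a) \<le> norm (\<bar>f x\<bar> * norm x powr a + \<bar>g x\<bar> * norm x powr a)"
        by (simp add: algebra_simps)
    qed
  qed
qed

abbreviation "TV \<equiv> total_var lam \<sigma>"

lemma TV_sets: "sets TV = sets borel" unfolding total_var_def using lam_sets by simp

lemma TV_fin: "finite_measure TV"
proof (rule finite_measureI)
  have "emeasure TV (space TV) = (\<integral>\<^sup>+ x. ennreal \<bar>\<sigma> x\<bar> * indicator (space lam) x \<partial>lam)"
    unfolding total_var_def by (subst emeasure_density) auto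
  also have "\<dots> = (\<integral>\<^sup>+ x. ennreal (norm (\<sigma> x)) \<partial>lam)"
    by (intro nn_integral_cong) auto
  also have "\<dots> < \<infinity>" using sig_int by (simp add: integrable_iff_bounded)
  finally show "emeasure TV (space TV) \<noteq> \<infinity>" by simp
qed

lemma TV_int:
  assumes "moment_class a lam f" "moment_class a lam g"
  shows "integrable TV (\<lambda>x. 1 + norm x powr a)"
proof -
  have "integrable lam (\<lambda>x. (1 + norm x powr a) * \<bar>\<sigma> x\<bar>)"
    using weight_int[OF sig_int sig_mom[OF assms]] .
  then show ?thesis by (subst mom_iff) (auto simp: mult.commute)
qed


lemma TV_sf: "sigma_finite_measure TV" using TV_fin unfolding finite_measure_def by auto

lemma part1:
  assumes "moment_class \<alpha> lam f" "moment_class \<alpha> lam g"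
  shows "integrable (TV \<Otimes>\<^sub>M TV) (\<lambda>z. \<Phi> (fst z - snd z))"
proof (rule bound_integrable[OF TV_sf])
  have wi: "integrable TV wa" using TV_int[OF assms] unfolding wa_def[abs_def] .
  then show "integrable TV (\<lambda>x. C * (1 + 2 powr \<alpha>) * wa x)" by auto
  show "integrable TV wa" by (rule wi)
  show "(\<lambda>z. \<Phi> (fst z - snd z)) \<in> borel_measurable (TV \<Otimes>\<^sub>M TV)"
    by (rule meas_lift2[OF TV_sets Kt_cont])
  show "\<bar>\<Phi> (fst z - snd z)\<bar> \<le> C * (1 + 2 powr \<alpha>) * wa (fst z) * wa (snd z)" for z
    by (rule Phi_diff_bound)
qed

lemma part2:
  assumes "moment_class \<beta> lam f" "moment_class \<beta> lam g"
  shows "integrable (TV \<Otimes>\<^sub>M TV) (\<lambda>z. K (fst z) (snd z))"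
proof -
  obtain cK where cK: "\<And>x y. \<bar>K x y\<bar> \<le> cK * w x * w y" using K_bound by blast
  show ?thesis
  proof (rule bound_integrable[OF TV_sf])
    have wi: "integrable TV w" using TV_int[OF assms] unfolding w_def[abs_def] .
    then show "integrable TV (\<lambda>x. cK * w x)" by auto
    show "integrable TV w" by (rule wi)
    show "(\<lambda>z. K (fst z) (snd z)) \<in> borel_measurable (TV \<Otimes>\<^sub>M TV)"
      by (rule meas_lift2[OF TV_sets K_cont])
    show "\<bar>K (fst z) (snd z)\<bar> \<le> cK * w (fst z) * w (snd z)" for z
      by (rule cK)
  qed
qed


lemma lam_sf: "sigma_finite_measure lam" using lam_fin unfolding finite_measure_def by auto

lemma mom_lam:
  assumes "moment_class a lam h" and [measurable]: "h \<in> borel_measurable lam"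
  shows "integrable lam (\<lambda>x. \<bar>h x\<bar> * norm x powr a)"
  using assms(1) unfolding moment_class_def by (subst (asm) mom_iff) auto

lemma p_meas[measurable]: "j < N \<Longrightarrow> p j \<in> borel_measurable lam"
  using meas_lam[OF p_cont] .

lemma p_int:
  assumes j: "j < N" and hi: "integrable lam h" and hw: "integrable lam (\<lambda>x. w x * \<bar>h x\<bar>)"
  shows "integrable lam (\<lambda>x. p j x * h x)"
proof -
  obtain cp where cp0: "cp \<ge> 0" and cp: "\<And>j x. j < N \<Longrightarrow> \<bar>p j x\<bar> \<le> cp * (1 + norm x ^ (r - 1))"
    using p_bound by blast
  have [measurable]: "h \<in> borel_measurable lam" using hi by auto
  have "integrable lam (\<lambda>x. (2 * cp) * (w x * \<bar>h x\<bar>))" using hw by auto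
  then show ?thesis
  proof (rule Bochner_Integration.integrable_bound)
    show "(\<lambda>x. p j x * h x) \<in> borel_measurable lam" using j by measurable
    show "AE x in lam. norm (p j x * h x) \<le> norm ((2 * cp) * (w x * \<bar>h x\<bar>))"
    proof (intro AE_I2)
      fix x
      have "\<bar>p j x\<bar> \<le> cp * (1 + norm x ^ (r - 1))" using cp[OF j] .
      also have "\<dots> \<le> cp * (2 * w x)" using mix1[of "norm x"] cp0 unfolding w_def
        by (intro mult_left_mono) auto
      finally have "\<bar>p j x\<bar> * \<bar>h x\<bar> \<le> cp * (2 * w x) * \<bar>h x\<bar>" by (intro mult_right_mono) auto
      moreover have "0 \<le> cp * (2 * w x) * \<bar>h x\<bar>" using cp0 w_pos[of x] by simp
      moreover have "\<bar>cp\<bar> = cp" "\<bar>w x\<bar> = w x" using cp0 w_pos[of x] by auto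
      ultimately show "norm (p j x * h x) \<le> norm ((2 * cp) * (w x * \<bar>h x\<bar>))"
        by (simp add: abs_mult mult_ac)
    qed
  qed
qed

lemma Phi_meas1[measurable]: "(\<lambda>y. \<Phi> (a - y)) \<in> borel_measurable lam"
  by (intro meas_lam continuous_intros)
lemma Phi_meas2[measurable]: "(\<lambda>y. \<Phi> (y - a)) \<in> borel_measurable lam"
  by (intro meas_lam continuous_intros)

lemma Phi_int1:
  assumes "integrable lam (\<lambda>x. wa x * \<bar>\<sigma> x\<bar>)"
  shows "integrable lam (\<lambda>y. \<Phi> (a - y) * \<sigma> y)"
proof -
  have "integrable lam (\<lambda>y. (C * (1 + 2 powr \<alpha>) * wa a) * (wa y * \<bar>\<sigma> y\<bar>))" using assms by auto
  then show ?thesis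
  proof (rule Bochner_Integration.integrable_bound)
    show "(\<lambda>y. \<Phi> (a - y) * \<sigma> y) \<in> borel_measurable lam" by measurable
    show "AE y in lam. norm (\<Phi> (a - y) * \<sigma> y) \<le> norm ((C * (1 + 2 powr \<alpha>) * wa a) * (wa y * \<bar>\<sigma> y\<bar>))"
    proof (intro AE_I2)
      fix y
      have "\<bar>\<Phi> (a - y)\<bar> * \<bar>\<sigma> y\<bar> \<le> (C * (1 + 2 powr \<alpha>) * wa a * wa y) * \<bar>\<sigma> y\<bar>"
        using Phi_diff_bound by (intro mult_right_mono) auto
      moreover have "0 \<le> C * (1 + 2 powr \<alpha>) * wa a * wa y * \<bar>\<sigma> y\<bar>"
        using C_nonneg wa_pos[of a] wa_pos[of y] by simp
      moreover have "\<bar>C\<bar> = C" "\<bar>wa a\<bar> = wa a" "\<bar>wa y\<bar> = wa y" using C_nonneg wa_pos[of a] wa_pos[of y] by auto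
      ultimately show "norm (\<Phi> (a - y) * \<sigma> y) \<le> norm ((C * (1 + 2 powr \<alpha>) * wa a) * (wa y * \<bar>\<sigma> y\<bar>))"
        by (simp add: abs_mult mult_ac)
    qed
  qed
qed

lemma Phi_int2:
  assumes "integrable lam (\<lambda>x. wa x * \<bar>\<sigma> x\<bar>)"
  shows "integrable lam (\<lambda>y. \<Phi> (y - a) * \<sigma> y)"
proof -
  have "\<Phi> (y - a) = \<Phi> (a - y)" for y using Phi_even[of "a - y"] by simp
  then show ?thesis using Phi_int1[OF assms, of a] by simp
qed

end

context kset2 begin

lemma part3:
  assumes ma: "moment_class \<alpha> lam f" "moment_class \<alpha> lam g"
    and mb: "moment_class \<beta> lam f" "moment_class \<beta> lam g"
    and orth: "\<forall>q\<in>poly_space (r - 1). (\<integral>x. q x * f x \<partial>lam) = (\<integral>x. q x * g x \<partial>lam)"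
  shows "discr2 lam \<sigma> (\<lambda>x y. \<Phi> (x - y)) = discr2 lam \<sigma> K"
proof -
  interpret pair_sigma_finite lam lam using lam_sf by (simp add: pair_sigma_finite_def)
  have wS: "integrable lam (\<lambda>x. w x * \<bar>\<sigma> x\<bar>)"
    using weight_int[OF sig_int sig_mom[OF mb]] unfolding w_def .
  have waS: "integrable lam (\<lambda>x. wa x * \<bar>\<sigma> x\<bar>)"
    using weight_int[OF sig_int sig_mom[OF ma]] unfolding wa_def .
  have wF: "integrable lam (\<lambda>x. w x * \<bar>f x\<bar>)"
    using weight_int[OF f_int mom_lam[OF mb(1) f_meas]] unfolding w_def .
  have wG: "integrable lam (\<lambda>x. w x * \<bar>g x\<bar>)"
    using weight_int[OF g_int mom_lam[OF mb(2) g_meas]] unfolding w_def .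
  define P where "P j x = p j x * \<sigma> x" for j x
  define Q where "Q j y = \<Phi> (xi j - y) * \<sigma> y" for j y
  define Q' where "Q' j x = \<Phi> (x - xi j) * \<sigma> x" for j x
  have Pi: "integrable lam (P j)" if "j < N" for j
    unfolding P_def[abs_def] using p_int[OF that sig_int wS] .
  have Qi: "integrable lam (Q j)" for j unfolding Q_def[abs_def] using Phi_int1[OF waS] .
  have Q'i: "integrable lam (Q' j)" for j unfolding Q'_def[abs_def] using Phi_int2[OF waS] .
  have P0: "(\<integral>x. P j x \<partial>lam) = 0" if j: "j < N" for j
  proof -
    have "(\<integral>x. P j x \<partial>lam) = (\<integral>x. p j x * f x - p j x * g x \<partial>lam)"
      unfolding P_def \<sigma>_def by (simp add: algebra_simps)
    also have "\<dots> = (\<integral>x. p j x * f x \<partial>lam) - (\<integral>x. p j x * g x \<partial>lam)"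
      using p_int[OF j f_int wF] p_int[OF j g_int wG] by simp
    also have "\<dots> = 0" using orth p_poly j by simp
    finally show ?thesis .
  qed
  have Kt_m[measurable]: "(\<lambda>z. \<Phi> (fst z - snd z)) \<in> borel_measurable (lam \<Otimes>\<^sub>M lam)"
    by (rule meas_lift2[OF lam_sets Kt_cont])
  have main_i: "integrable (lam \<Otimes>\<^sub>M lam) (\<lambda>z. \<Phi> (fst z - snd z) * \<sigma> (fst z) * \<sigma> (snd z))"
  proof (rule bound_integrable[OF lam_sf])
    show "integrable lam (\<lambda>x. C * (1 + 2 powr \<alpha>) * (wa x * \<bar>\<sigma> x\<bar>))" using waS by auto
    show "integrable lam (\<lambda>x. wa x * \<bar>\<sigma> x\<bar>)" by (rule waS)
    show "(\<lambda>z. \<Phi> (fst z - snd z) * \<sigma> (fst z) * \<sigma> (snd z)) \<in> borel_measurable (lam \<Otimes>\<^sub>M lam)"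
      by measurable
    show "\<bar>\<Phi> (fst z - snd z) * \<sigma> (fst z) * \<sigma> (snd z)\<bar> \<le>
        C * (1 + 2 powr \<alpha>) * (wa (fst z) * \<bar>\<sigma> (fst z)\<bar>) * (wa (snd z) * \<bar>\<sigma> (snd z)\<bar>)" for z
    proof -
      have "\<bar>\<Phi> (fst z - snd z)\<bar> * (\<bar>\<sigma> (fst z)\<bar> * \<bar>\<sigma> (snd z)\<bar>) \<le>
          (C * (1 + 2 powr \<alpha>) * wa (fst z) * wa (snd z)) * (\<bar>\<sigma> (fst z)\<bar> * \<bar>\<sigma> (snd z)\<bar>)"
        using Phi_diff_bound by (intro mult_right_mono) auto
      then show ?thesis by (simp add: abs_mult mult_ac)
    qed
  qed
  define S1 where "S1 z = (\<Sum>j<N. P j (fst z) * Q j (snd z))" for z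
  define S2 where "S2 z = (\<Sum>k<N. Q' k (fst z) * P k (snd z))" for z
  define S3 where "S3 z = (\<Sum>j<N. \<Sum>k<N. \<Phi> (xi j - xi k) * (P j (fst z) * P k (snd z)))" for z
  have S1i: "integrable (lam \<Otimes>\<^sub>M lam) S1" unfolding S1_def[abs_def]
    using prod_integrable(1)[OF lam_sf Pi Qi] by auto
  have S2i: "integrable (lam \<Otimes>\<^sub>M lam) S2" unfolding S2_def[abs_def]
    using prod_integrable(1)[OF lam_sf Q'i Pi] by auto
  have S3i: "integrable (lam \<Otimes>\<^sub>M lam) S3" unfolding S3_def[abs_def]
    by (intro Bochner_Integration.integrable_sum Bochner_Integration.integrable_mult_right
        prod_integrable(1)[OF lam_sf Pi Pi]) auto
  have S1z: "integral\<^sup>L (lam \<Otimes>\<^sub>M lam) S1 = 0" unfolding S1_def[abs_def]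
    using prod_integrable[OF lam_sf Pi Qi] P0 by (simp add: Bochner_Integration.integral_sum)
  have S2z: "integral\<^sup>L (lam \<Otimes>\<^sub>M lam) S2 = 0" unfolding S2_def[abs_def]
    using prod_integrable[OF lam_sf Q'i Pi] P0 by (simp add: Bochner_Integration.integral_sum)
  have T0: "(\<integral>z. \<Phi> (xi j - xi k) * (P j (fst z) * P k (snd z)) \<partial>(lam \<Otimes>\<^sub>M lam)) = 0"
    if "j < N" "k < N" for j k
    using prod_integrable(2)[OF lam_sf Pi[OF that(1)] Pi[OF that(2)]] P0[OF that(1)] by simp
  have Ti: "integrable (lam \<Otimes>\<^sub>M lam) (\<lambda>z. \<Phi> (xi j - xi k) * (P j (fst z) * P k (snd z)))"
    if "j < N" "k < N" for j k
    using prod_integrable(1)[OF lam_sf Pi[OF that(1)] Pi[OF that(2)]] by auto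
  have S3z: "integral\<^sup>L (lam \<Otimes>\<^sub>M lam) S3 = 0"
  proof -
    have "integral\<^sup>L (lam \<Otimes>\<^sub>M lam) S3 = (\<Sum>j<N. \<integral>z. (\<Sum>k<N. \<Phi> (xi j - xi k) * (P j (fst z) * P k (snd z))) \<partial>(lam \<Otimes>\<^sub>M lam))"
      unfolding S3_def[abs_def] by (rule Bochner_Integration.integral_sum) (use Ti in auto)
    also have "\<dots> = (\<Sum>j<N. \<Sum>k<N. \<integral>z. \<Phi> (xi j - xi k) * (P j (fst z) * P k (snd z)) \<partial>(lam \<Otimes>\<^sub>M lam))"
      by (intro sum.cong refl Bochner_Integration.integral_sum) (use Ti in auto)
    also have "\<dots> = 0"
    proof (intro sum.neutral ballI)
      fix j k assume "j \<in> {..<N}" "k \<in> {..<N}"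
      then show "(\<integral>z. \<Phi> (xi j - xi k) * (P j (fst z) * P k (snd z)) \<partial>(lam \<Otimes>\<^sub>M lam)) = 0"
        using T0 by blast
    qed
    finally show ?thesis .
  qed
  have ident: "K (fst z) (snd z) * \<sigma> (fst z) * \<sigma> (snd z) =
     \<Phi> (fst z - snd z) * \<sigma> (fst z) * \<sigma> (snd z) - S1 z - S2 z + S3 z" for z
    unfolding red_kernel_def S1_def S2_def S3_def P_def Q_def Q'_def
    by (simp add: sum_distrib_left sum_distrib_right algebra_simps)
  have "discr2 lam \<sigma> K = (\<integral>z. \<Phi> (fst z - snd z) * \<sigma> (fst z) * \<sigma> (snd z) - S1 z - S2 z + S3 z \<partial>(lam \<Otimes>\<^sub>M lam))"
    unfolding discr2_def ident ..
  also have "\<dots> = (\<integral>z. \<Phi> (fst z - snd z) * \<sigma> (fst z) * \<sigma> (snd z) \<partial>(lam \<Otimes>\<^sub>M lam))"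
    using main_i S1i S2i S3i S1z S2z S3z by simp
  also have "\<dots> = discr2 lam \<sigma> (\<lambda>x y. \<Phi> (x - y))" unfolding discr2_def ..
  finally show ?thesis ..
qed

end

theorem mainTheorem12:
  fixes r N :: nat and \<alpha> C :: real
    and \<Phi> :: "real^'n::finite \<Rightarrow> real"
    and xi :: "nat \<Rightarrow> real^'n" and p :: "nat \<Rightarrow> real^'n \<Rightarrow> real"
    and lam :: "(real^'n) measure" and f g :: "real^'n \<Rightarrow> real"
  assumes r: "r \<ge> 1" and alpha: "\<alpha> > 0"
    and CP: "cond_pos_def r (\<lambda>x. complex_of_real (\<Phi> x))"
    and growth: "\<forall>x. \<bar>\<Phi> x\<bar> \<le> C * (1 + norm x powr \<alpha>)"
    and N: "N = (CARD('n) + r - 1) choose (r - 1)"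
    and xi_inj: "inj_on xi {..<N}"
    and unisolv: "unisolvent (r - 1) N xi"
    and p_poly: "\<forall>j<N. p j \<in> poly_space (r - 1)"
    and lagrange: "\<forall>j<N. \<forall>k<N. p j (xi k) = (if j = k then 1 else 0)"
    and lam_fin: "finite_measure lam" and lam_sets: "sets lam = sets borel"
    and f_int: "integrable lam f" and g_int: "integrable lam g"
  shows
    "let \<beta> = max (real r - 1) ((real r - 1 + \<alpha>) / 2);
         \<sigma> = (\<lambda>x. f x - g x);
         Kt = (\<lambda>x y. \<Phi> (x - y));
         K = red_kernel \<Phi> p xi N
     in (moment_class \<alpha> lam f \<and> moment_class \<alpha> lam g \<longrightarrow>
           integrable (total_var lam \<sigma> \<Otimes>\<^sub>M total_var lam \<sigma>) (\<lambda>z. Kt (fst z) (snd z)))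
      \<and> (moment_class \<beta> lam f \<and> moment_class \<beta> lam g \<longrightarrow>
           integrable (total_var lam \<sigma> \<Otimes>\<^sub>M total_var lam \<sigma>) (\<lambda>z. K (fst z) (snd z)))
      \<and> (moment_class \<alpha> lam f \<and> moment_class \<alpha> lam g \<and>
         moment_class \<beta> lam f \<and> moment_class \<beta> lam g \<and>
         (\<forall>q\<in>poly_space (r - 1). (\<integral>x. q x * f x \<partial>lam) = (\<integral>x. q x * g x \<partial>lam))
         \<longrightarrow> discr2 lam \<sigma> Kt = discr2 lam \<sigma> K)"
  proof -
  interpret kset2 r N \<alpha> C \<Phi> xi p lam f g
    by (intro kset2.intro kset.intro kset2_axioms.intro)
      (fact r alpha CP growth unisolv p_poly lagrange lam_fin lam_sets f_int g_int)+
  have s: "(\<lambda>x. f x - g x) = \<sigma>" by (simp add: \<sigma>_def[abs_def])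
  have b: "max (real r - 1) ((real r - 1 + \<alpha>) / 2) = \<beta>" by (simp add: \<beta>_def)
  show ?thesis unfolding Let_def s b using part1 part2 part3 by blast
qed

end
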